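(* Let $\lambda=\{\mathbf u_0,\dots,\mathbf u_{d-1}\}\subset\mathbb{Z}^n_{\ge0}$ be a finite downward-closed subset, enumerated so that $\mathbf u_0=0$ and each $\{\mathbf u_0,\dots,\mathbf u_k\}$ is downward closed. Define for $1\le m\le d-1$ $$W_T(\mathbf u_m)=\begin{cases}0&\text{if }\mathbf u_m=e_i\text{ for some }i,\\ \#\{(i,j):1\le i\le j\le d-1,\ \mathbf u_i+\mathbf u_j=\mathbf u_m\}-1&\text{otherwise,}\end{cases}$$ $$W_B(\mathbf u_m)=\#\{(i,j,k)\in\{1,\dots,d-1\}^3: i<k,\ \mathbf u_i+\mathbf u_j+\mathbf u_k=\mathbf u_m\}.$$ Then $W_T(\mathbf u_m)\le W_B(\mathbf u_m)$ for all $m=1,\dots,d-1$.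
   Context: A subset $\lambda\subset\mathbb{Z}^n_{\ge0}$ is downward closed if $\mathbf u\in\lambda$ and $0\le\mathbf v\le\mathbf u$ coordinatewise imply $\mathbf v\in\lambda$. $e_i$ denotes the $i$-th unit vector. (In the paper $\lambda$ arises as the largest partition of a nested partition with an enumeration compatible with the nesting.) *)

theory Defs
  imports Main
begin

text \<open>Vectors in Z^n_{>=0} are represented as functions nat => nat vanishing outside {..<n}.\<close>

definition vecs :: "nat \<Rightarrow> (nat \<Rightarrow> nat) set" where
  "vecs n = {v. \<forall>i\<ge>n. v i = 0}"

definition unit_vec :: "nat \<Rightarrow> nat \<Rightarrow> nat" where
  "unit_vec i = (\<lambda>j. if j = i then 1 else 0)"

definition downward_closed :: "nat \<Rightarrow> (nat \<Rightarrow> nat) set \<Rightarrow> bool" where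
  "downward_closed n L \<longleftrightarrow> L \<subseteq> vecs n \<and>
     (\<forall>u\<in>L. \<forall>v. v \<le> u \<longrightarrow> v \<in> L)"

definition vadd :: "(nat \<Rightarrow> nat) \<Rightarrow> (nat \<Rightarrow> nat) \<Rightarrow> nat \<Rightarrow> nat" where
  "vadd a b = (\<lambda>j. a j + b j)"

definition W_T :: "nat \<Rightarrow> (nat \<Rightarrow> nat \<Rightarrow> nat) \<Rightarrow> nat \<Rightarrow> nat \<Rightarrow> int" where
  "W_T n u d m = (if \<exists>i<n. u m = unit_vec i then 0
     else int (card {(i, j). 1 \<le> i \<and> i \<le> j \<and> j \<le> d - 1 \<and> vadd (u i) (u j) = u m}) - 1)"

definition W_B :: "(nat \<Rightarrow> nat \<Rightarrow> nat) \<Rightarrow> nat \<Rightarrow> nat \<Rightarrow> int" where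
  "W_B u d m = int (card {(i, j, k). i \<in> {1..d-1} \<and> j \<in> {1..d-1} \<and> k \<in> {1..d-1}
      \<and> i < k \<and> vadd (vadd (u i) (u j)) (u k) = u m})"

end

theory Submission
  imports Defs "HOL-Library.Function_Algebras"
begin

lemma vadd_eq: "vadd a b = a + b"
  by (simp add: vadd_def plus_fun_def)

theorem mainTheorem17:
  fixes n d :: nat and u :: "nat \<Rightarrow> nat \<Rightarrow> nat"
  assumes "d \<ge> 1"
    and "inj_on u {..<d}"
    and "u 0 = (\<lambda>_. 0)"
    and "\<And>k. k < d \<Longrightarrow> downward_closed n (u ` {..k})"
    and "1 \<le> m" and "m \<le> d - 1"
  shows "W_T n u d m \<le> W_B u d m"
proof (cases "\<exists>i<n. u m = unit_vec i")
  case True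
  then show ?thesis by (simp add: W_T_def W_B_def)
next
  case notunit: False
  define v where "v = u m"
  define L where "L = u ` {..<d}"
  have Leq: "u ` {..d-1} = L" unfolding L_def using assms(1)
    by (metis Suc_diff_1 lessThan_Suc_atMost less_le_trans zero_less_one)
  have dc: "downward_closed n L" using assms(4)[of "d-1"] Leq assms(1) by simp
  have md: "m < d" using assms by simp
  have vL: "v \<in> L" unfolding v_def L_def using md by simp
  have down: "w \<in> L" if "w \<le> v" for w using dc vL that unfolding downward_closed_def by blast
  have vvec: "v \<in> vecs n" using dc vL unfolding downward_closed_def by blast
  define ix where "ix = the_inv_into {..<d} u"
  have ix1: "u (ix w) = w" "ix w < d" if "w \<in> L" for w
    using that assms(2) unfolding ix_def L_def
    by (auto simp: the_inv_into_f_f)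
  have ix2: "ix (u i) = i" if "i < d" for i
    using that assms(2) unfolding ix_def by (simp add: the_inv_into_f_f)
  have ixpos: "ix w \<ge> 1" if "w \<in> L" "w \<noteq> 0" for w
  proof (rule ccontr)
    assume "\<not> ix w \<ge> 1"
    then have "ix w = 0" by simp
    then have "w = u 0" using ix1[OF that(1)] by simp
    then show False using that assms(3) by (simp add: zero_fun_def)
  qed
  have unz: "u i \<noteq> 0" if "1 \<le> i" "i < d" for i
  proof
    assume "u i = 0"
    then have "u i = u 0" using assms(3) by (simp add: zero_fun_def)
    then have "i = 0" using assms(2) that using assms(1) by (auto dest: inj_onD)
    then show False using that by simp
  qed
  have vnz: "v \<noteq> 0" using unz[of m] assms md v_def by simp
  then obtain t where t: "v t \<noteq> 0" by (auto simp: zero_fun_def)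
  have tn: "t < n"
  proof (rule ccontr)
    assume "\<not> t < n"
    then have "v t = 0" using vvec by (simp add: vecs_def)
    with t show False by simp
  qed
  define e where "e = unit_vec t"
  have ev: "e \<le> v" using t unfolding e_def unit_vec_def le_fun_def by auto
  have enz: "e \<noteq> 0" unfolding e_def unit_vec_def zero_fun_def by (metis one_neq_zero)
  have ve: "v \<noteq> e" using notunit tn v_def e_def by auto
  define ST where "ST = {(i, j). 1 \<le> i \<and> i \<le> j \<and> j \<le> d - 1 \<and> vadd (u i) (u j) = u m}"
  define SB where "SB = {(i, j, k). i \<in> {1..d-1} \<and> j \<in> {1..d-1} \<and> k \<in> {1..d-1}
      \<and> i < k \<and> vadd (vadd (u i) (u j)) (u k) = u m}"
  define ie where "ie = ix e"
  define ie' where "ie' = ix (v - e)"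
  define E where "E = {p \<in> ST. u (fst p) = e \<or> u (snd p) = e}"
  have Esub: "E \<subseteq> {(min ie ie', max ie ie')}"
  proof
    fix p assume pE: "p \<in> E"
    obtain i j where p: "p = (i, j)" by fastforce
    have ij: "1 \<le> i" "i \<le> j" "j < d" "u i + u j = v" "u i = e \<or> u j = e"
      using pE md unfolding E_def ST_def p v_def by (auto simp: vadd_eq)
    show "p \<in> {(min ie ie', max ie ie')}"
    proof (cases "u i = e")
      case True
      then have "u j = v - e" using ij(4) by (metis add_diff_cancel_left')
      have "ie = i" unfolding ie_def using ix2[of i] ij True by simp
      moreover have "ie' = j" unfolding ie'_def using ix2[of j] ij \<open>u j = v - e\<close> by simp
      ultimately show ?thesis using ij(2) p by simp
    next
      case False
      then have "u j = e" using ij by simp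
      then have "u i = v - e" using ij(4) by (metis add_diff_cancel_right')
      have "ie = j" unfolding ie_def using ix2[of j] ij \<open>u j = e\<close> by simp
      moreover have "ie' = i" unfolding ie'_def using ix2[of i] ij \<open>u i = v - e\<close> by simp
      ultimately show ?thesis using ij(2) p by simp
    qed
  qed
  have cardE: "card E \<le> 1" using card_mono[OF _ Esub] by simp
  have finST: "finite ST"
    by (rule finite_subset[of _ "{..d} \<times> {..d}"]) (auto simp: ST_def)
  have finSB: "finite SB"
    by (rule finite_subset[of _ "{..d} \<times> {..d} \<times> {..d}"]) (auto simp: SB_def)
  define sel where "sel = (\<lambda>(i::nat, j::nat). if e \<le> u i then (u i, u j) else (u j, u i))"
  define f where "f = (\<lambda>p. let a = fst (sel p); b = snd (sel p) in
       (min ie (ix b), ix (a - e), max ie (ix b)))"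
  define g where "g = (\<lambda>(i, j::nat, k). let b = (if u i = e then u k else u i) in
       (min (ix b) (ix (v - b)), max (ix b) (ix (v - b))))"
  have eL: "e \<in> L" using down ev by simp
  have ue: "u ie = e" "ie < d" using ix1[OF eL] ie_def by auto
  have iepos: "ie \<ge> 1" using ixpos[OF eL enz] ie_def by simp
  have key: "f p \<in> SB \<and> g (f p) = p" if pin: "p \<in> ST - E" for p
  proof -
    obtain i j where p: "p = (i, j)" by fastforce
    have ij: "1 \<le> i" "i \<le> j" "j < d" "u i + u j = v" "u i \<noteq> e" "u j \<noteq> e"
      using pin md unfolding E_def ST_def p v_def by (auto simp: vadd_eq)
    have id: "i < d" using ij by simp
    obtain a b where ab: "sel p = (a, b)" by fastforce
    have abcases: "(a = u i \<and> b = u j) \<or> (a = u j \<and> b = u i)"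
      using ab unfolding sel_def p by (auto split: if_splits)
    have ae: "e \<le> a"
    proof (cases "e \<le> u i")
      case True then show ?thesis using ab unfolding sel_def p by simp
    next
      case False
      then have "a = u j" using ab unfolding sel_def p by simp
      have "u i t = 0" using False unfolding e_def unit_vec_def le_fun_def
        by (metis Suc_leI bot_nat_0.extremum gr0I One_nat_def)
      moreover have "v t \<ge> 1" using t by simp
      ultimately have "u j t \<ge> 1" using ij(4) by (metis add_0 plus_fun_apply)
      then show ?thesis using \<open>a = u j\<close> unfolding e_def unit_vec_def le_fun_def by auto
    qed
    have abv: "a + b = v" using abcases ij(4) by (auto simp: add.commute)
    have ane: "a \<noteq> e" "b \<noteq> e" using abcases ij by auto
    have bix: "ix b \<ge> 1" "ix b \<le> d - 1" "u (ix b) = b"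
      using abcases ij ix2 id by auto
    have aeL: "a - e \<in> L" by (intro down) (simp add: le_fun_def flip: abv, meson diff_le_self le_add1 order_trans)
    have aenz: "a - e \<noteq> 0"
    proof
      assume "a - e = 0"
      then have "a \<le> e" by (simp add: le_fun_def zero_fun_def fun_diff_def) (metis diff_is_0_eq)
      then show False using ae ane by simp
    qed
    have j1: "ix (a - e) \<ge> 1" "ix (a - e) \<le> d - 1" "u (ix (a - e)) = a - e"
      using ixpos[OF aeL aenz] ix1[OF aeL] by auto
    have ieb: "ie \<noteq> ix b" using ue bix ane by metis
    have sum: "e + (a - e) + b = v"
    proof -
      have "e + (a - e) = a" using ae by (simp add: le_fun_def fun_eq_iff)
      then show ?thesis using abv by simp
    qed
    have fp: "f p = (min ie (ix b), ix (a - e), max ie (ix b))"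
      unfolding f_def using ab by simp
    have inSB: "f p \<in> SB"
    proof -
      have "u (min ie (ix b)) + u (ix (a - e)) + u (max ie (ix b)) = v"
      proof (cases "ie \<le> ix b")
        case True then show ?thesis using sum ue bix j1 by simp
      next
        case False then show ?thesis using sum ue bix j1 by (simp add: algebra_simps)
      qed
      then show ?thesis unfolding fp SB_def using iepos ue bix j1 ieb md v_def
        by (auto simp: vadd_eq)
    qed
    have gb: "(if u (min ie (ix b)) = e then u (max ie (ix b)) else u (min ie (ix b))) = b"
      using ue bix ane ieb by (cases "ie \<le> ix b") auto
    have gfp: "g (f p) = (min (ix b) (ix (v - b)), max (ix b) (ix (v - b)))"
      unfolding fp g_def using gb by (simp add: Let_def)
    have "v - b = a" using abv by (metis add_diff_cancel_right')
    then have "g (f p) = (min (ix b) (ix a), max (ix b) (ix a))" using gfp by simp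
    also have "\<dots> = (i, j)" using abcases ix2 id ij by auto
    finally show ?thesis using inSB p by simp
  qed
  have inj: "inj_on f (ST - E)"
    by (rule inj_on_inverseI[where g = g]) (use key in blast)
  have "card (ST - E) \<le> card SB"
    by (rule card_inj_on_le[OF inj]) (use key finSB in auto)
  moreover have "card ST \<le> card (ST - E) + card E"
  proof -
    have "ST = (ST - E) \<union> E" unfolding E_def by auto
    then show ?thesis by (metis card_Un_le)
  qed
  ultimately have "int (card ST) - 1 \<le> int (card SB)" using cardE by linarith
  then show ?thesis using notunit unfolding W_T_def W_B_def ST_def SB_def by simp
qed

end
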